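(* Let $\frac12<s<1$, $M\in\mathbb R\setminus\{0\}$ and $c>0$. Then for all $n,m\in\mathbb Z^*$ and $k\in\{2,3\}$, $$|\lambda_n^1-\lambda_m^k|\ge\frac{3|M|}{\frac{2M^2}{\rho_1}+2}>0,$$ and for all $n,m\in\mathbb Z^*$ with $n\neq m$, $$|\lambda_n^1-\lambda_m^1|\ge c\left|\mathrm{sgn}(n)\rho_{|n|}^{1/(2s)}-\mathrm{sgn}(m)\rho_{|m|}^{1/(2s)}\right|>0.$$
   Context: $(-d_x^2)^s$ denotes the fractional Laplacian; $0<\rho_1\le\rho_2\le\cdots\to\infty$ are the eigenvalues (with multiplicity) of its realization on $L^2(-1,1)$ with zero exterior Dirichlet condition. Standing fact used: for $\frac12<s<1$ these eigenvalues are simple. Fix $M\in\mathbb R\setminus\{0\}$. For $n\ge1$, $\mu_n^1$ is the unique real root of $\mu^3+\rho_n\mu-M\rho_n=0$ (it lies strictly between $0$ and $M$), $\mu_n^2=-\frac{\mu_n^1}{2}+i\sqrt{3(\mu_n^1/2)^2+\rho_n}$ and $\mu_n^3=\overline{\mu_n^2}$. For $c\in\mathbb R$, $\mathbb Z^*=\mathbb Z\setminus\{0\}$, $S=\{(n,j):n\in\mathbb Z^*,\ j\in\{1,2,3\}\}$ and $\lambda_n^j=\mu_{|n|}^j+i\,\mathrm{sgn}(n)\,c\,\rho_{|n|}^{1/(2s)}$ for $(n,j)\in S$. *)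

theory Defs
  imports "HOL-Analysis.Analysis"
begin

text \<open>The eigenvalue sequence rho (indexed from 1) of the Dirichlet fractional
Laplacian on (-1,1) is treated as an abstract parameter.
Hypotheses used: 0 < rho 1, rho strictly increasing on indices >= 1
(simplicity of the eigenvalues, listed in increasing order), rho tends to infinity.\<close>

definition dirichlet_frac_eigs :: "(nat \<Rightarrow> real) \<Rightarrow> bool" where
  "dirichlet_frac_eigs \<rho> \<longleftrightarrow>
     0 < \<rho> 1 \<and> strict_mono_on {1..} \<rho> \<and> filterlim \<rho> at_top sequentially"

definition mu1 :: "real \<Rightarrow> real \<Rightarrow> real" where
  "mu1 M r = (THE x::real. x ^ 3 + r * x - M * r = 0)"

definition mu :: "real \<Rightarrow> real \<Rightarrow> nat \<Rightarrow> complex" where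
  "mu M r j =
     (if j = 1 then complex_of_real (mu1 M r)
      else if j = 2 then Complex (- mu1 M r / 2) (sqrt (3 * (mu1 M r / 2)^2 + r))
      else Complex (- mu1 M r / 2) (- sqrt (3 * (mu1 M r / 2)^2 + r)))"

definition lam :: "real \<Rightarrow> real \<Rightarrow> real \<Rightarrow> (nat \<Rightarrow> real) \<Rightarrow> int \<Rightarrow> nat \<Rightarrow> complex" where
  "lam s M c \<rho> n j =
     mu M (\<rho> (nat \<bar>n\<bar>)) j
     + \<i> * complex_of_real (real_of_int (sgn n) * c * \<rho> (nat \<bar>n\<bar>) powr (1 / (2 * s)))"

end

theory Submission
  imports Defs
begin

lemma cubic_root_unique:
  fixes r x y :: real
  assumes "r > 0" "x^3 + r*x - M*r = 0" "y^3 + r*y - M*r = 0"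
  shows "x = y"
proof -
  have "(x - y) * (x^2 + x*y + y^2 + r) = 0"
    using assms(2,3) by (simp add: algebra_simps power2_eq_square power3_eq_cube)
  moreover have "x^2 + x*y + y^2 + r > 0"
  proof -
    have "x^2 + x*y + y^2 = (x + y/2)^2 + 3*y^2/4" by (simp add: algebra_simps power2_eq_square)
    also have "\<dots> \<ge> 0" by simp
    finally show ?thesis using assms(1) by linarith
  qed
  ultimately show ?thesis by simp
qed

lemma cubic_root_exists:
  fixes r M :: real
  assumes "r > 0"
  shows "\<exists>x. x^3 + r*x - M*r = 0 \<and> (M > 0 \<longrightarrow> 0 \<le> x \<and> x \<le> M) \<and> (M < 0 \<longrightarrow> M \<le> x \<and> x \<le> 0)"
proof -
  let ?f = "\<lambda>x::real. x^3 + r*x - M*r"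
  have cont: "continuous_on S ?f" for S by (intro continuous_intros)
  show ?thesis
  proof (cases "M \<ge> 0")
    case True
    have "?f 0 \<le> 0" using True assms by simp
    moreover have "0 \<le> ?f M" using True by simp
    ultimately obtain x where "x \<in> {0..M}" "?f x = 0"
      using IVT'[of ?f 0 0 M] cont True by auto
    then show ?thesis by auto
  next
    case False
    have "?f M \<le> 0" using False by (simp add: power3_eq_cube mult_nonneg_nonpos mult_nonpos_nonpos)
    moreover have "0 \<le> ?f 0" using False assms by (simp add: mult_nonpos_nonneg)
    ultimately obtain x where "x \<in> {M..0}" "?f x = 0"
      using IVT'[of ?f M 0 0] cont False by auto
    then show ?thesis using False by auto
  qed
qed

lemma mu1_props:
  fixes r M :: real
  assumes "r > 0" "M \<noteq> 0"
  shows "(mu1 M r)^3 + r * mu1 M r - M*r = 0"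
    and "M > 0 \<Longrightarrow> 0 < mu1 M r"
    and "M < 0 \<Longrightarrow> mu1 M r < 0"
    and "\<bar>mu1 M r\<bar> \<ge> \<bar>M\<bar> * r / (M^2 + r)"
proof -
  obtain x where x: "x^3 + r*x - M*r = 0" "(M > 0 \<longrightarrow> 0 \<le> x \<and> x \<le> M)" "(M < 0 \<longrightarrow> M \<le> x \<and> x \<le> 0)"
    using cubic_root_exists[OF assms(1)] by blast
  have eq: "mu1 M r = x"
    unfolding mu1_def
    using cubic_root_unique[OF assms(1)] x(1) by (intro the_equality) blast+
  show "(mu1 M r)^3 + r * mu1 M r - M*r = 0" using eq x by simp
  have x0: "x \<noteq> 0" using x(1) assms by auto
  show "M > 0 \<Longrightarrow> 0 < mu1 M r" using eq x x0 by auto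
  show "M < 0 \<Longrightarrow> mu1 M r < 0" using eq x x0 by auto
  have xM: "x^2 \<le> M^2"
  proof (cases "M > 0")
    case True then show ?thesis using x by (intro power_mono) auto
  next
    case False
    then have "M < 0" using assms by auto
    then have "(-x)^2 \<le> (-M)^2" using x by (intro power_mono) auto
    then show ?thesis by simp
  qed
  have "x * (x^2 + r) = M * r" using x(1) by (simp add: algebra_simps power2_eq_square power3_eq_cube)
  then have "\<bar>x * (x^2 + r)\<bar> = \<bar>M * r\<bar>" by simp
  moreover have xr: "x^2 + r > 0" using assms(1) by (simp add: add_nonneg_pos)
  ultimately have "\<bar>x\<bar> * (x^2 + r) = \<bar>M\<bar> * r" using assms(1)
    by (simp only: abs_mult abs_of_pos)
  with xr have "\<bar>x\<bar> = \<bar>M\<bar> * r / (x^2 + r)" by (simp add: field_simps)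
  also have "\<dots> \<ge> \<bar>M\<bar> * r / (M^2 + r)"
  proof -
    have "0 < M^2 + r" using assms(1) by (simp add: add_nonneg_pos)
    then have "0 < (M^2 + r) * (x^2 + r)" using xr by simp
    then show ?thesis using xM assms by (intro divide_left_mono) auto
  qed
  finally show "\<bar>mu1 M r\<bar> \<ge> \<bar>M\<bar> * r / (M^2 + r)" using eq by simp
qed

lemma bound_mono:
  fixes M r r1 :: real
  assumes "0 < r1" "r1 \<le> r"
  shows "\<bar>M\<bar> * r / (M^2 + r) \<ge> \<bar>M\<bar> / (M^2 / r1 + 1)"
proof -
  have "\<bar>M\<bar> * r / (M^2 + r) = \<bar>M\<bar> / (M^2 / r + 1)"
    using assms by (simp add: field_simps)
  also have "\<dots> \<ge> \<bar>M\<bar> / (M^2 / r1 + 1)"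
  proof -
    have a: "M^2 / r \<le> M^2 / r1" using assms by (intro divide_left_mono) auto
    have b: "0 < M^2 / r + 1" using assms by (simp add: add_nonneg_pos)
    have c: "0 < M^2 / r1 + 1" using assms by (simp add: add_nonneg_pos)
    show ?thesis using a b c by (intro divide_left_mono) (auto intro: mult_pos_pos)
  qed
  finally show ?thesis .
qed

theorem lemma3p7:
  fixes s M c :: real and \<rho> :: "nat \<Rightarrow> real"
  assumes "1/2 < s" and "s < 1" and "M \<noteq> 0" and "c > 0"
    and "dirichlet_frac_eigs \<rho>"
  shows "(\<forall>n m k. n \<noteq> 0 \<longrightarrow> m \<noteq> 0 \<longrightarrow> k \<in> {2, 3} \<longrightarrow>
            cmod (lam s M c \<rho> n 1 - lam s M c \<rho> m k) \<ge> 3 * \<bar>M\<bar> / (2 * M^2 / \<rho> 1 + 2))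
       \<and> 3 * \<bar>M\<bar> / (2 * M^2 / \<rho> 1 + 2) > 0
       \<and> (\<forall>n m. n \<noteq> 0 \<longrightarrow> m \<noteq> 0 \<longrightarrow> n \<noteq> m \<longrightarrow>
            cmod (lam s M c \<rho> n 1 - lam s M c \<rho> m 1)
              \<ge> c * \<bar>real_of_int (sgn n) * \<rho> (nat \<bar>n\<bar>) powr (1 / (2 * s))
                    - real_of_int (sgn m) * \<rho> (nat \<bar>m\<bar>) powr (1 / (2 * s))\<bar>
            \<and> c * \<bar>real_of_int (sgn n) * \<rho> (nat \<bar>n\<bar>) powr (1 / (2 * s))
                    - real_of_int (sgn m) * \<rho> (nat \<bar>m\<bar>) powr (1 / (2 * s))\<bar> > 0)"
proof -
  have r1: "0 < \<rho> 1" and sm: "strict_mono_on {1..} \<rho>"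
    using assms(5) unfolding dirichlet_frac_eigs_def by auto
  have rge: "\<rho> 1 \<le> \<rho> k" if "k \<ge> 1" for k
  proof (cases "k = 1")
    case False then have "1 < k" using that by linarith
    then show ?thesis using strict_mono_onD[OF sm _ _ \<open>1 < k\<close>] that by auto
  qed simp
  have rpos: "\<rho> k > 0" if "k \<ge> 1" for k using rge[OF that] r1 by linarith
  define B where "B = \<bar>M\<bar> / (M^2 / \<rho> 1 + 1)"
  have Bpos: "B > 0" unfolding B_def using assms(3) r1 by (intro divide_pos_pos) (auto intro: add_nonneg_pos)
  have B3: "3 * \<bar>M\<bar> / (2 * M^2 / \<rho> 1 + 2) = 3/2 * B"
    unfolding B_def using r1 by (simp add: field_simps)
  have mub: "\<bar>mu1 M (\<rho> k)\<bar> \<ge> B" if "k \<ge> 1" for k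
    using mu1_props(4)[OF rpos[OF that] assms(3)] bound_mono[OF r1 rge[OF that], of M]
    unfolding B_def by linarith
  have sg: "(M > 0 \<longrightarrow> 0 < mu1 M (\<rho> k)) \<and> (M < 0 \<longrightarrow> mu1 M (\<rho> k) < 0)" if "k \<ge> 1" for k
    using mu1_props(2,3)[OF rpos[OF that] assms(3)] by auto
  have P1: "cmod (lam s M c \<rho> n 1 - lam s M c \<rho> m k) \<ge> 3/2 * B"
    if "n \<noteq> 0" "m \<noteq> 0" "k \<in> {2,3}" for n m k
  proof -
    define a where "a = mu1 M (\<rho> (nat \<bar>n\<bar>))"
    define b where "b = mu1 M (\<rho> (nat \<bar>m\<bar>))"
    have n1: "nat \<bar>n\<bar> \<ge> 1" and m1: "nat \<bar>m\<bar> \<ge> 1" using that by auto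
    have re: "Re (lam s M c \<rho> n 1 - lam s M c \<rho> m k) = a + b/2"
      using that(3) unfolding lam_def mu_def a_def b_def by auto
    have ha: "\<bar>a\<bar> \<ge> B" using mub[OF n1] unfolding a_def .
    have hb: "\<bar>b\<bar> \<ge> B" using mub[OF m1] unfolding b_def .
    have sa: "(M > 0 \<longrightarrow> 0 < a) \<and> (M < 0 \<longrightarrow> a < 0)" using sg[OF n1] unfolding a_def .
    have sb: "(M > 0 \<longrightarrow> 0 < b) \<and> (M < 0 \<longrightarrow> b < 0)" using sg[OF m1] unfolding b_def .
    have "\<bar>a + b/2\<bar> \<ge> 3/2 * B"
    proof (cases "M > 0")
      case True
      then have "a > 0" "b > 0" using sa sb by auto
      then show ?thesis using ha hb by linarith
    next
      case False
      then have "M < 0" using assms(3) by linarith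
      then have "a < 0" "b < 0" using sa sb by auto
      then show ?thesis using ha hb by linarith
    qed
    then show ?thesis using abs_Re_le_cmod[of "lam s M c \<rho> n 1 - lam s M c \<rho> m k"] re by linarith
  qed
  have P2: "cmod (lam s M c \<rho> n 1 - lam s M c \<rho> m 1)
              \<ge> c * \<bar>real_of_int (sgn n) * \<rho> (nat \<bar>n\<bar>) powr (1 / (2 * s))
                    - real_of_int (sgn m) * \<rho> (nat \<bar>m\<bar>) powr (1 / (2 * s))\<bar>" for n m
  proof -
    have "Im (lam s M c \<rho> n 1 - lam s M c \<rho> m 1) = c * (real_of_int (sgn n) * \<rho> (nat \<bar>n\<bar>) powr (1 / (2 * s))
                    - real_of_int (sgn m) * \<rho> (nat \<bar>m\<bar>) powr (1 / (2 * s)))"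
      unfolding lam_def mu_def by (simp add: algebra_simps)
    then show ?thesis using abs_Im_le_cmod[of "lam s M c \<rho> n 1 - lam s M c \<rho> m 1"] assms(4)
      by (simp add: abs_mult)
  qed
  have P3: "c * \<bar>real_of_int (sgn n) * \<rho> (nat \<bar>n\<bar>) powr (1 / (2 * s))
                    - real_of_int (sgn m) * \<rho> (nat \<bar>m\<bar>) powr (1 / (2 * s))\<bar> > 0"
    if "n \<noteq> 0" "m \<noteq> 0" "n \<noteq> m" for n m
  proof -
    have n1: "nat \<bar>n\<bar> \<ge> 1" and m1: "nat \<bar>m\<bar> \<ge> 1" using that by auto
    define ee where "ee = 1 / (2 * s)"
    have p: "ee > 0" unfolding ee_def using assms(1) by simp
    define x where "x = \<rho> (nat \<bar>n\<bar>) powr ee"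
    define y where "y = \<rho> (nat \<bar>m\<bar>) powr ee"
    have xp: "x > 0" unfolding x_def using rpos[OF n1] by simp
    have yp: "y > 0" unfolding y_def using rpos[OF m1] by simp
    have "real_of_int (sgn n) * x - real_of_int (sgn m) * y \<noteq> 0"
    proof (cases "sgn n = sgn m")
      case True
      have "\<bar>n\<bar> \<noteq> \<bar>m\<bar>"
      proof
        assume "\<bar>n\<bar> = \<bar>m\<bar>"
        then have "sgn n * \<bar>n\<bar> = sgn m * \<bar>m\<bar>" using True by simp
        then show False using that(3) by (simp only: sgn_mult_abs)
      qed
      then have ne: "nat \<bar>n\<bar> \<noteq> nat \<bar>m\<bar>" by simp
      have "\<rho> (nat \<bar>n\<bar>) \<noteq> \<rho> (nat \<bar>m\<bar>)"
      proof (cases "nat \<bar>n\<bar> < nat \<bar>m\<bar>")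
        case True
        then show ?thesis using strict_mono_onD[OF sm _ _ True] n1 m1 by auto
      next
        case False
        then have lt: "nat \<bar>m\<bar> < nat \<bar>n\<bar>" using ne by linarith
        show ?thesis using strict_mono_onD[OF sm _ _ lt] n1 m1 by auto
      qed
      then have "x \<noteq> y"
      proof (cases rule: linorder_cases[of "\<rho> (nat \<bar>n\<bar>)" "\<rho> (nat \<bar>m\<bar>)"])
        case less then show ?thesis unfolding x_def y_def using rpos[OF n1] p
          powr_less_mono2[OF p _ less] by auto
      next
        case greater then show ?thesis unfolding x_def y_def using rpos[OF m1] p
          powr_less_mono2[OF p _ greater] by auto
      qed simp
      then show ?thesis using True that by (auto simp: sgn_if split: if_splits)
    next
      case False
      then show ?thesis using that xp yp by (auto simp: sgn_if split: if_splits)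
    qed
    then show ?thesis using assms(4) unfolding x_def y_def ee_def by simp
  qed
  have Q: "3 * \<bar>M\<bar> / (2 * M^2 / \<rho> 1 + 2) > 0" using B3 Bpos by simp
  show ?thesis
    apply (intro conjI allI impI Q P2 P3)
       apply (subst B3)
       apply (rule P1)
         apply assumption+
    done
qed

end
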